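(* Let $\mathcal{A},\mathcal{B}$ be standard operator algebras on infinite-dimensional Banach spaces $\mathcal{X},\mathcal{Y}$, and let $\phi:\mathcal{A}\to\mathcal{B}$ be a bijection such that $\phi$ is 2-quadratic preserving in both directions. Then $\phi(0)=0$ and $\phi(\mathbb{F}I)=\mathbb{F}I$; in particular $\phi(I)=\lambda I$ for some scalar $\lambda$.
   Context: A standard operator algebra on $\mathcal{X}$ is a norm-closed subalgebra of $\mathcal{B}(\mathcal{X})$ containing the identity $I$ and all finite-rank operators; $\mathbb{F}\in\{\mathbb{R},\mathbb{C}\}$ is the scalar field. An operator $T$ is quadratic if there exist scalars $a,b$ with $(T-aI)(T-bI)=0$. $\phi_2:\mathcal{A}\otimes M_2\to\mathcal{B}\otimes M_2$ is $\phi_2((a_{ij})_{2\times 2})=(\phi(a_{ij}))_{2\times 2}$, and "2-quadratic preserving in both directions" means $T\in\mathcal{A}\otimes M_2$ is quadratic iff $\phi_2(T)$ is quadratic. *)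

theory Defs
  imports "HOL-Analysis.Analysis"
begin

text \<open>Scalar field: 'k :: real_normed_field (by Mazur/Gelfand-Mazur, a commutative real
normed division algebra is R or C up to isometric isomorphism, so this covers exactly
F in {R, C}).\<close>

definition kbanach :: "('k::real_normed_field \<Rightarrow> 'v::banach \<Rightarrow> 'v) \<Rightarrow> bool" where
  "kbanach sc \<longleftrightarrow> vector_space sc \<and> (\<forall>c x. norm (sc c x) = norm c * norm x)
     \<and> (\<forall>r x. sc (of_real r) x = scaleR r x)"

definition inf_dim :: "('k::field \<Rightarrow> 'v::ab_group_add \<Rightarrow> 'v) \<Rightarrow> bool" where
  "inf_dim sc \<longleftrightarrow> \<not> (\<exists>F. finite F \<and> module.span sc F = UNIV)"

definition bop :: "('k::real_normed_field \<Rightarrow> 'v::real_normed_vector \<Rightarrow> 'v) \<Rightarrow> ('v \<Rightarrow> 'v) \<Rightarrow> bool" where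
  "bop sc T \<longleftrightarrow> Vector_Spaces.linear sc sc T \<and> (\<exists>K. \<forall>x. norm (T x) \<le> K * norm x)"

definition finite_rank :: "('k::real_normed_field \<Rightarrow> 'v::real_normed_vector \<Rightarrow> 'v) \<Rightarrow> ('v \<Rightarrow> 'v) \<Rightarrow> bool" where
  "finite_rank sc T \<longleftrightarrow> bop sc T \<and> (\<exists>F. finite F \<and> range T \<subseteq> module.span sc F)"

definition std_op_alg :: "('k::real_normed_field \<Rightarrow> 'v::real_normed_vector \<Rightarrow> 'v) \<Rightarrow> ('v \<Rightarrow> 'v) set \<Rightarrow> bool" where
  "std_op_alg sc A \<longleftrightarrow>
     A \<subseteq> {T. bop sc T} \<and> id \<in> A
     \<and> (\<forall>S\<in>A. \<forall>T\<in>A. (\<lambda>x. S x + T x) \<in> A \<and> S \<circ> T \<in> A)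
     \<and> (\<forall>c. \<forall>T\<in>A. (\<lambda>x. sc c (T x)) \<in> A)
     \<and> {T. finite_rank sc T} \<subseteq> A
     \<and> (\<forall>T Ts. (\<forall>n. Ts n \<in> A) \<and> bop sc T \<and> (\<lambda>n. onorm (\<lambda>x. Ts n x - T x)) \<longlonglongrightarrow> 0
              \<longrightarrow> T \<in> A)"

text \<open>2x2 operator matrices (elements of B(X) tensor M_2), indexed by bool.\<close>
type_synonym 'v mat2 = "bool \<Rightarrow> bool \<Rightarrow> 'v \<Rightarrow> 'v"

definition mat2_mult :: "'v::ab_group_add mat2 \<Rightarrow> 'v mat2 \<Rightarrow> 'v mat2" where
  "mat2_mult S T = (\<lambda>i j x. S i False (T False j x) + S i True (T True j x))"

definition mat2_shift :: "('k \<Rightarrow> 'v \<Rightarrow> 'v) \<Rightarrow> 'v::ab_group_add mat2 \<Rightarrow> 'k \<Rightarrow> 'v mat2" where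
  "mat2_shift sc T a = (\<lambda>i j x. T i j x - (if i = j then sc a x else 0))"

definition quadratic2 :: "('k \<Rightarrow> 'v \<Rightarrow> 'v) \<Rightarrow> 'v::ab_group_add mat2 \<Rightarrow> bool" where
  "quadratic2 sc T \<longleftrightarrow> (\<exists>a b. mat2_mult (mat2_shift sc T a) (mat2_shift sc T b) = (\<lambda>i j x. 0))"

end

theory Submission
  imports Defs "HOL-Computational_Algebra.Fundamental_Theorem_Algebra"
begin

definition Rrel :: "('k::field \<Rightarrow> 'v::ab_group_add \<Rightarrow> 'v) \<Rightarrow> ('v \<Rightarrow> 'v) \<Rightarrow> ('v \<Rightarrow> 'v) \<Rightarrow> bool" where
  "Rrel sc X Y \<longleftrightarrow> (\<exists>c. \<forall>x. X (X x) + Y (X x) = sc c (X x) \<and> X (Y x) + Y (Y x) = sc c (Y x))"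

definition Qrel :: "('k::field \<Rightarrow> 'v::ab_group_add \<Rightarrow> 'v) \<Rightarrow> ('v \<Rightarrow> 'v) \<Rightarrow> ('v \<Rightarrow> 'v) \<Rightarrow> bool" where
  "Qrel sc X Y \<longleftrightarrow> (\<exists>c. \<forall>x. X (X x) = sc c (X x) \<and> X (Y x) = sc c (Y x))"

lemma lin_facts:
  assumes "Vector_Spaces.linear sc sc X"
  shows "X (u + v) = X u + X v" "X (sc c u) = sc c (X u)" "X (u - v) = X u - X v" "X 0 = 0"
    "X (- u) = - X u"
proof -
  interpret Vector_Spaces.linear sc sc X by fact
  show "X (u + v) = X u + X v" "X (sc c u) = sc c (X u)" "X (u - v) = X u - X v" "X 0 = 0"  "X (- u) = - X u"
    by (simp_all add: add scale diff neg)
qed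

lemma quadR:
  fixes sc :: "'k::field \<Rightarrow> 'v::ab_group_add \<Rightarrow> 'v"
  assumes vs: "vector_space sc" and lX: "Vector_Spaces.linear sc sc X" and lY: "Vector_Spaces.linear sc sc Y"
  shows "quadratic2 sc (\<lambda>i j. if j then Y else X) \<longleftrightarrow> Rrel sc X Y"
proof -
  interpret vector_space sc by fact
  have E: "mat2_mult (mat2_shift sc (\<lambda>i j. if j then Y else X) a) (mat2_shift sc (\<lambda>i j. if j then Y else X) b) i j x
     = X ((if j then Y else X) x) + Y ((if j then Y else X) x) - sc (a+b) ((if j then Y else X) x)
       + (if i = j then sc (a*b) x else 0)" for a b i j x
    by (cases i; cases j) (simp_all add: mat2_mult_def mat2_shift_def lin_facts[OF lX] lin_facts[OF lY]
        algebra_simps scale_left_distrib)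
  show ?thesis
  proof
    assume "quadratic2 sc (\<lambda>i j. if j then Y else X)"
    then obtain a b where ab: "mat2_mult (mat2_shift sc (\<lambda>i j. if j then Y else X) a) (mat2_shift sc (\<lambda>i j. if j then Y else X) b) = (\<lambda>i j x. 0)"
      unfolding quadratic2_def by blast
    have "X (X x) + Y (X x) = sc (a+b) (X x) \<and> X (Y x) + Y (Y x) = sc (a+b) (Y x)" for x
    proof -
      have 1: "mat2_mult (mat2_shift sc (\<lambda>i j. if j then Y else X) a) (mat2_shift sc (\<lambda>i j. if j then Y else X) b) True False x = 0"
        using ab by simp
      have 2: "mat2_mult (mat2_shift sc (\<lambda>i j. if j then Y else X) a) (mat2_shift sc (\<lambda>i j. if j then Y else X) b) False True x = 0"
        using ab by simp
      show ?thesis using 1 2 unfolding E by (simp add: algebra_simps)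
    qed
    then show "Rrel sc X Y" unfolding Rrel_def by blast
  next
    assume "Rrel sc X Y"
    then obtain c where c: "\<And>x. X (X x) + Y (X x) = sc c (X x) \<and> X (Y x) + Y (Y x) = sc c (Y x)"
      unfolding Rrel_def by blast
    have "mat2_mult (mat2_shift sc (\<lambda>i j. if j then Y else X) c) (mat2_shift sc (\<lambda>i j. if j then Y else X) 0) = (\<lambda>i j x. 0)"
      apply (rule ext)+
      subgoal for i j x using c[of x] unfolding E by (cases j) auto
      done
    then show "quadratic2 sc (\<lambda>i j. if j then Y else X)" unfolding quadratic2_def by blast
  qed
qed

lemma quadQ:
  fixes sc :: "'k::field \<Rightarrow> 'v::ab_group_add \<Rightarrow> 'v"
  assumes vs: "vector_space sc" and lX: "Vector_Spaces.linear sc sc X" and lY: "Vector_Spaces.linear sc sc Y"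
    and nz: "(x0::'v) \<noteq> 0"
  shows "quadratic2 sc (\<lambda>i j. if i then (\<lambda>x. 0) else if j then Y else X) \<longleftrightarrow> Qrel sc X Y"
proof -
  interpret vector_space sc by fact
  let ?M = "\<lambda>i j. if i then (\<lambda>x. 0) else if j then Y else X"
  have E1: "mat2_mult (mat2_shift sc ?M a) (mat2_shift sc ?M b) True j x = (if j then sc (a*b) x else 0)" for a b j x
    by (cases j) (simp_all add: mat2_mult_def mat2_shift_def)
  have E2: "mat2_mult (mat2_shift sc ?M a) (mat2_shift sc ?M b) False False x = X (X x) - sc (a+b) (X x) + sc (a*b) x" for a b x
    by (simp add: mat2_mult_def mat2_shift_def lin_facts[OF lX] lin_facts[OF lY] algebra_simps scale_left_distrib)
  have E3: "mat2_mult (mat2_shift sc ?M a) (mat2_shift sc ?M b) False True x = X (Y x) - sc (a+b) (Y x)" for a b x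
    by (simp add: mat2_mult_def mat2_shift_def lin_facts[OF lX] lin_facts[OF lY] algebra_simps scale_left_distrib)
  show ?thesis
  proof
    assume "quadratic2 sc ?M"
    then obtain a b where ab: "mat2_mult (mat2_shift sc ?M a) (mat2_shift sc ?M b) = (\<lambda>i j x. 0)"
      unfolding quadratic2_def by blast
    have "sc (a*b) x0 = 0" using fun_cong[OF fun_cong[OF fun_cong[OF ab, of True], of True], of x0] E1 by simp
    then have ab0: "a*b = 0" using nz by simp
    have "X (X x) = sc (a+b) (X x) \<and> X (Y x) = sc (a+b) (Y x)" for x
      using fun_cong[OF fun_cong[OF fun_cong[OF ab, of False], of False], of x]
        fun_cong[OF fun_cong[OF fun_cong[OF ab, of False], of True], of x] E2 E3 ab0 by simp
    then show "Qrel sc X Y" unfolding Qrel_def by blast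
  next
    assume "Qrel sc X Y"
    then obtain c where c: "\<And>x. X (X x) = sc c (X x) \<and> X (Y x) = sc c (Y x)"
      unfolding Qrel_def by blast
    have "mat2_mult (mat2_shift sc ?M c) (mat2_shift sc ?M 0) = (\<lambda>i j x. 0)"
      apply (rule ext)+
      subgoal for i j x using c[of x] E1[of c 0 j x] E2[of c 0 x] E3[of c 0 x] by (cases i; cases j) auto
      done
    then show "quadratic2 sc ?M" unfolding quadratic2_def by blast
  qed
qed


definition goodG :: "'a::real_normed_vector \<Rightarrow> ('a \<times> real) set \<Rightarrow> bool" where
  "goodG v G \<longleftrightarrow> (\<forall>x y z. (x,y)\<in>G \<longrightarrow> (x,z)\<in>G \<longrightarrow> y = z)
    \<and> (\<forall>x y x' y'. (x,y)\<in>G \<longrightarrow> (x',y')\<in>G \<longrightarrow> (x+x', y+y') \<in> G)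
    \<and> (\<forall>x y r. (x,y)\<in>G \<longrightarrow> (scaleR r x, r*y) \<in> G)
    \<and> (\<forall>x y. (x,y)\<in>G \<longrightarrow> y \<le> norm x)
    \<and> (v, norm v) \<in> G"

lemma goodG_D:
  assumes "goodG v G"
  shows "(x,y)\<in>G \<Longrightarrow> (x,z)\<in>G \<Longrightarrow> y = z"
    "(x,y)\<in>G \<Longrightarrow> (x',y')\<in>G \<Longrightarrow> (x+x', y+y') \<in> G"
    "(x,y)\<in>G \<Longrightarrow> (scaleR r x, r*y) \<in> G"
    "(x,y)\<in>G \<Longrightarrow> y \<le> norm x"
    "(v, norm v) \<in> G"
  using assms unfolding goodG_def by blast+

lemma goodG_chain:
  assumes C: "C \<in> chains {G. goodG v G}" and ne: "C \<noteq> {}"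
  shows "goodG v (\<Union>C)"
proof -
  have g: "goodG v G" if "G \<in> C" for G using C that chainsD2 by blast
  have two: "\<exists>G\<in>C. p \<in> G \<and> q \<in> G" if pq: "p \<in> \<Union>C" "q \<in> \<Union>C" for p q
  proof -
    obtain G1 G2 where "G1 \<in> C" "G2 \<in> C" "p \<in> G1" "q \<in> G2" using pq by blast
    then show ?thesis using chainsD[OF C, of G1 G2] by blast
  qed
  obtain G0 where G0: "G0 \<in> C" using ne by blast
  show ?thesis unfolding goodG_def
  proof (intro conjI allI impI)
    fix x y z assume "(x,y)\<in>\<Union>C" "(x,z)\<in>\<Union>C"
    then obtain G where "G\<in>C" "(x,y)\<in>G" "(x,z)\<in>G" using two by blast
    then show "y = z" using goodG_D(1)[OF g] by blast
  next
    fix x y x' y' assume "(x,y)\<in>\<Union>C" "(x',y')\<in>\<Union>C"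
    then obtain G where "G\<in>C" "(x,y)\<in>G" "(x',y')\<in>G" using two by blast
    then show "(x+x', y+y') \<in> \<Union>C" using goodG_D(2)[OF g] by blast
  next
    fix x y r assume "(x,y)\<in>\<Union>C"
    then obtain G where "G\<in>C" "(x,y)\<in>G" by blast
    then show "(scaleR r x, r*y) \<in> \<Union>C" using goodG_D(3)[OF g] by blast
  next
    fix x y assume "(x,y)\<in>\<Union>C"
    then obtain G where "G\<in>C" "(x,y)\<in>G" by blast
    then show "y \<le> norm x" using goodG_D(4)[OF g] by blast
  next
    show "(v, norm v) \<in> \<Union>C" using goodG_D(5)[OF g[OF G0]] G0 by blast
  qed
qed

lemma goodG_init:
  assumes v: "v \<noteq> 0"
  shows "goodG v {(scaleR r v, r * norm v) | r. True}"
  unfolding goodG_def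
proof (intro conjI allI impI)
  fix x y z assume "(x,y) \<in> {(scaleR r v, r * norm v) | r. True}" "(x,z) \<in> {(scaleR r v, r * norm v) | r. True}"
  then obtain r s where "x = scaleR r v" "y = r * norm v" "x = scaleR s v" "z = s * norm v" by blast
  then show "y = z" using v by (simp add: scaleR_cancel_right)
next
  fix x y x' y' assume "(x,y) \<in> {(scaleR r v, r * norm v) | r. True}" "(x',y') \<in> {(scaleR r v, r * norm v) | r. True}"
  then obtain r s where "x = scaleR r v" "y = r * norm v" "x' = scaleR s v" "y' = s * norm v" by blast
  then show "(x+x', y+y') \<in> {(scaleR r v, r * norm v) | r. True}"
    by (intro CollectI exI[of _ "r+s"]) (simp add: scaleR_add_left algebra_simps)
next
  fix x y t assume "(x,y) \<in> {(scaleR r v, r * norm v) | r. True}"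
  then obtain r where "x = scaleR r v" "y = r * norm v" by blast
  then show "(scaleR t x, t*y) \<in> {(scaleR r v, r * norm v) | r. True}"
    by (intro CollectI exI[of _ "t*r"]) simp
next
  fix x y assume "(x,y) \<in> {(scaleR r v, r * norm v) | r. True}"
  then obtain r where "x = scaleR r v" "y = r * norm v" by blast
  then show "y \<le> norm x" by (simp add: mult_right_mono)
next
  show "(v, norm v) \<in> {(scaleR r v, r * norm v) | r. True}" by (intro CollectI exI[of _ 1]) simp
qed

lemma goodG_extend:
  assumes gM: "goodG v M" and w: "w \<notin> fst ` M"
  shows "\<exists>M'. goodG v M' \<and> M \<subseteq> M' \<and> M' \<noteq> M"
proof -
  note D = goodG_D[OF gM]
  have zero: "(0, 0) \<in> M" using D(3)[OF D(5), of 0] by simp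
  have neg: "(-x, -y) \<in> M" if "(x,y) \<in> M" for x y using D(3)[OF that, of "-1"] by simp
  let ?S = "(\<lambda>(a,b). b - norm (a - w)) ` M"
  have ub: "s \<le> norm (a' + w) - b'" if sa: "s \<in> ?S" "(a',b') \<in> M" for s a' b'
  proof -
    obtain a b where ab: "(a,b) \<in> M" "s = b - norm (a - w)" using sa(1) by auto
    have "b + b' \<le> norm (a + a')" using D(4)[OF D(2)[OF ab(1) sa(2)]] .
    also have "\<dots> \<le> norm (a - w) + norm (a' + w)"
      using norm_triangle_ineq[of "a - w" "a' + w"] by simp
    finally show ?thesis using ab by simp
  qed
  define t where "t = Sup ?S"
  have Sne: "?S \<noteq> {}" using zero by blast
  have bdd: "bdd_above ?S" using ub zero by (intro bdd_aboveI[of _ "norm (0 + w) - 0"]) blast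
  have t1: "b - norm (a - w) \<le> t" if "(a,b) \<in> M" for a b
    unfolding t_def by (rule cSup_upper[OF _ bdd]) (use that in force)
  have t2: "t \<le> norm (a' + w) - b'" if "(a',b') \<in> M" for a' b'
    unfolding t_def by (rule cSup_least[OF Sne]) (use ub that in blast)
  define M' where "M' = {(x + scaleR r w, y + r * t) | x y r. (x,y) \<in> M}"
  have inM: "(x + scaleR r w, y + r * t) \<in> M'" if "(x,y)\<in>M" for x y r
    unfolding M'_def using that by blast
  have domsub: "x' - x \<in> fst ` M" if "(x,y)\<in>M" "(x',y')\<in>M" for x y x' y'
    using D(2)[OF that(2) neg[OF that(1)]] by force
  have goodM': "goodG v M'"
    unfolding goodG_def
  proof (intro conjI allI impI)
    fix p y z assume "(p,y)\<in>M'" "(p,z)\<in>M'"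
    then obtain x1 y1 r1 x2 y2 r2 where e: "(x1,y1)\<in>M" "p = x1 + scaleR r1 w" "y = y1 + r1 * t"
      "(x2,y2)\<in>M" "p = x2 + scaleR r2 w" "z = y2 + r2 * t" unfolding M'_def by blast
    have r: "r1 = r2"
    proof (rule ccontr)
      assume ne: "r1 \<noteq> r2"
      have "scaleR (r1 - r2) w = x2 - x1" using e(2) e(5) by (simp add: algebra_simps)
      then have "scaleR (1/(r1-r2)) (scaleR (r1 - r2) w) = scaleR (1/(r1-r2)) (x2 - x1)" by simp
      then have "w = scaleR (1/(r1-r2)) (x2 - x1)" using ne by simp
      moreover have "scaleR (1/(r1-r2)) (x2 - x1) \<in> fst ` M"
      proof -
        obtain q where "(x2 - x1, q) \<in> M" using domsub[OF e(1) e(4)] by force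
        then show ?thesis using D(3) by force
      qed
      ultimately show False using w by simp
    qed
    then have "x1 = x2" using e by simp
    then show "y = z" using e r D(1) by simp
  next
    fix p y p' y' assume "(p,y)\<in>M'" "(p',y')\<in>M'"
    then obtain x1 y1 r1 x2 y2 r2 where e: "(x1,y1)\<in>M" "p = x1 + scaleR r1 w" "y = y1 + r1 * t"
      "(x2,y2)\<in>M" "p' = x2 + scaleR r2 w" "y' = y2 + r2 * t" unfolding M'_def by blast
    have "(x1 + x2 + scaleR (r1 + r2) w, y1 + y2 + (r1 + r2) * t) \<in> M'"
      using inM[OF D(2)[OF e(1) e(4)]] by blast
    then show "(p + p', y + y') \<in> M'" using e by (simp add: algebra_simps scaleR_add_left)
  next
    fix p y s assume "(p,y)\<in>M'"
    then obtain x1 y1 r1 where e: "(x1,y1)\<in>M" "p = x1 + scaleR r1 w" "y = y1 + r1 * t"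
      unfolding M'_def by blast
    have "(scaleR s x1 + scaleR (s*r1) w, s*y1 + (s*r1) * t) \<in> M'"
      using inM[OF D(3)[OF e(1)]] by blast
    then show "(scaleR s p, s * y) \<in> M'" using e by (simp add: algebra_simps scaleR_add_right)
  next
    fix p y assume "(p,y)\<in>M'"
    then obtain x y1 r where e: "(x,y1)\<in>M" "p = x + scaleR r w" "y = y1 + r * t"
      unfolding M'_def by blast
    show "y \<le> norm p"
    proof (cases "r = 0")
      case True then show ?thesis using D(4)[OF e(1)] e by simp
    next
      case False
      have x0: "(scaleR (1/\<bar>r\<bar>) x, (1/\<bar>r\<bar>) * y1) \<in> M" using D(3)[OF e(1)] .
      show ?thesis
      proof (cases "r > 0")
        case True
        have "t \<le> norm (scaleR (1/r) x + w) - (1/r) * y1" using t2[OF x0] True by simp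
        then have "r * t \<le> r * (norm (scaleR (1/r) x + w) - (1/r) * y1)" using True by (simp add: mult_left_mono)
        also have "\<dots> = norm (scaleR r (scaleR (1/r) x + w)) - y1" using True by (simp add: right_diff_distrib)
        also have "\<dots> = norm (x + scaleR r w) - y1" using True by (simp add: scaleR_add_right)
        finally show ?thesis using e by simp
      next
        case False
        then have rn: "r < 0" using \<open>r \<noteq> 0\<close> by simp
        define s where "s = - r"
        have s: "s > 0" using rn s_def by simp
        have x1: "(scaleR (1/s) x, (1/s) * y1) \<in> M" using D(3)[OF e(1)] .
        have "(1/s) * y1 - norm (scaleR (1/s) x - w) \<le> t" using t1[OF x1] .
        then have "s * ((1/s) * y1 - norm (scaleR (1/s) x - w)) \<le> s * t"
          using s by (intro mult_left_mono) auto
        then have "y1 - s * norm (scaleR (1/s) x - w) \<le> s * t"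
          using s by (simp add: right_diff_distrib)
        moreover have "s * norm (scaleR (1/s) x - w) = norm (scaleR s (scaleR (1/s) x - w))"
          using s by simp
        moreover have "scaleR s (scaleR (1/s) x - w) = x + scaleR r w"
          using s unfolding s_def by (simp add: scaleR_diff_right)
        ultimately have "y1 - norm (x + scaleR r w) \<le> s * t" by simp
        moreover have "r * t = - (s * t)" unfolding s_def by simp
        ultimately have "y1 + r*t \<le> norm (x + scaleR r w)" by linarith
        then show ?thesis using e(3) e(2) by simp
      qed
    qed
  next
    show "(v, norm v) \<in> M'" using inM[OF D(5), of 0] by simp
  qed
  have "M \<subseteq> M'" using inM[of _ _ 0] by auto
  moreover have "M' \<noteq> M"
  proof
    assume "M' = M"
    then have "(w, t) \<in> M" using inM[OF zero, of 1] by simp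
    then show False using w by force
  qed
  ultimately show ?thesis using goodM' by blast
qed

lemma real_hb:
  fixes v :: "'a::real_normed_vector"
  assumes v: "v \<noteq> 0"
  shows "\<exists>g::'a \<Rightarrow> real. linear g \<and> (\<forall>x. \<bar>g x\<bar> \<le> norm x) \<and> g v = norm v"
proof -
  have "\<forall>C\<in>chains {G. goodG v G}. \<exists>U\<in>{G. goodG v G}. \<forall>X\<in>C. X \<subseteq> U"
  proof
    fix C assume C: "C \<in> chains {G. goodG v G}"
    show "\<exists>U\<in>{G. goodG v G}. \<forall>X\<in>C. X \<subseteq> U"
    proof (cases "C = {}")
      case True then show ?thesis using goodG_init[OF v] by blast
    next
      case False then show ?thesis using goodG_chain[OF C] by blast
    qed
  qed
  from Zorn_Lemma2[OF this] obtain M where M: "goodG v M" "\<And>X. goodG v X \<Longrightarrow> M \<subseteq> X \<Longrightarrow> X = M"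
    by blast
  note D = goodG_D[OF M(1)]
  have dom: "\<exists>y. (x,y) \<in> M" for x
  proof (rule ccontr)
    assume "\<nexists>y. (x, y) \<in> M"
    then have "x \<notin> fst ` M" by force
    then show False using goodG_extend[OF M(1)] M(2) by blast
  qed
  define g where "g x = (THE y. (x,y) \<in> M)" for x
  have gM: "(x, g x) \<in> M" for x
    unfolding g_def using dom[of x] D(1) by (metis theI)
  have gu: "g x = y" if "(x,y)\<in>M" for x y using D(1)[OF gM that] .
  have lin: "linear g"
  proof (rule linearI)
    show "g (x + y) = g x + g y" for x y using gu[OF D(2)[OF gM gM]] .
    show "g (scaleR r x) = r *\<^sub>R g x" for r x using gu[OF D(3)[OF gM]] by simp
  qed
  have "\<bar>g x\<bar> \<le> norm x" for x
  proof -
    have "g x \<le> norm x" using D(4)[OF gM] .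
    moreover have "- g x \<le> norm x" using D(4)[OF D(3)[OF gM[of x], of "-1"]] by simp
    ultimately show ?thesis by simp
  qed
  moreover have "g v = norm v" using gu[OF D(5)] .
  ultimately show ?thesis using lin by blast
qed


abbreviation mpr :: "real poly \<Rightarrow> 'a::real_algebra_1 poly" where
  "mpr p \<equiv> map_poly of_real p"

lemma mpr_add: "mpr (p + q) = (mpr p + mpr q :: 'a::real_algebra_1 poly)"
  by (rule poly_eqI) (simp add: coeff_map_poly)

lemma mpr_diff: "mpr (p - q) = (mpr p - mpr q :: 'a::real_algebra_1 poly)"
  by (rule poly_eqI) (simp add: coeff_map_poly)

lemma mpr_mult: "mpr (p * q) = (mpr p * mpr q :: 'a::{real_algebra_1,comm_ring_1} poly)"
  by (rule poly_eqI) (simp add: coeff_map_poly coeff_mult of_real_sum)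

lemma mpr_pCons: "mpr (pCons a p) = (pCons (of_real a) (mpr p) :: 'a::real_algebra_1 poly)"
  by (simp add: map_poly_pCons)

lemma poly_mpr_of_real: "poly (mpr p) (of_real x :: 'a::{real_algebra_1,comm_ring_1}) = of_real (poly p x)"
  by (induction p) (auto simp: map_poly_pCons)

lemma degree_mpr: "degree (mpr p :: 'a::{real_algebra_1} poly) = degree p"
  by (rule degree_map_poly) simp

lemma mpr_eq_0_iff: "(mpr p :: 'a::{real_algebra_1} poly) = 0 \<longleftrightarrow> p = 0"
  by (rule map_poly_eq_0_iff) auto

lemma real_poly_factor:
  fixes P :: "real poly"
  assumes deg: "degree P \<ge> 1"
  shows "(\<exists>r. poly P r = 0) \<or> (\<exists>\<beta> \<gamma>. \<beta>^2 < 4*\<gamma> \<and> [:\<gamma>,\<beta>,1:] dvd P)"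
proof -
  let ?Pc = "mpr P :: complex poly"
  have "\<not> constant (poly ?Pc)" using deg by (simp add: constant_degree degree_mpr)
  then obtain z where z: "poly ?Pc z = 0" using fundamental_theorem_of_algebra by blast
  show ?thesis
  proof (cases "Im z = 0")
    case True
    then have "z = of_real (Re z)" by (simp add: complex_eq_iff)
    then have "of_real (poly P (Re z)) = (0::complex)" using z poly_mpr_of_real by metis
    then show ?thesis by auto
  next
    case False
    have cc: "map_poly cnj ?Pc = ?Pc"
      by (rule poly_eqI) (simp add: coeff_map_poly)
    have zc: "poly ?Pc (cnj z) = 0"
      using poly_map_poly_cnj[of ?Pc "cnj z"] z cc by simp
    define D :: "real poly" where "D = [:(cmod z)^2, -2 * Re z, 1:]"
    have cm: "cmod z * cmod z = Im z * Im z + Re z * Re z" using cmod_power2[of z] by (simp add: power2_eq_square)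
    have mD: "mpr D = [:-z,1:] * [:- cnj z, 1:]"
      unfolding D_def by (simp add: map_poly_pCons complex_eq_iff cm power2_eq_square algebra_simps)
    have dz: "[:-z,1:] dvd ?Pc" using z poly_eq_0_iff_dvd by blast
    then obtain Q where Q: "?Pc = [:-z,1:] * Q" by (elim dvdE)
    have "poly Q (cnj z) = 0" using zc Q False by (simp add: complex_eq_iff)
    then obtain Q2 where Q2: "Q = [:- cnj z,1:] * Q2" using poly_eq_0_iff_dvd by (metis dvdE)
    have PD: "?Pc = mpr D * Q2" using Q Q2 mD by (metis mult.assoc)
    have Dnz: "D \<noteq> 0" unfolding D_def by simp
    define R where "R = P mod D"
    define E where "E = Q2 - mpr (P div D)"
    have "P = D * (P div D) + R" unfolding R_def by simp
    then have "?Pc = mpr D * mpr (P div D) + mpr R" by (metis mpr_add mpr_mult)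
    then have mR: "mpr R = mpr D * E" unfolding E_def using PD by (simp add: algebra_simps)
    have "R = 0"
    proof (rule ccontr)
      assume Rnz: "R \<noteq> 0"
      then have "degree R < degree D" unfolding R_def using degree_mod_less[OF Dnz, of P] by simp
      then have dR: "degree R < 2" unfolding D_def by simp
      have "mpr R \<noteq> (0::complex poly)" using Rnz mpr_eq_0_iff by blast
      then have Enz: "E \<noteq> 0" using mR by auto
      have "mpr D \<noteq> (0::complex poly)" using Dnz mpr_eq_0_iff by blast
      then have "degree (mpr R :: complex poly) = degree (mpr D :: complex poly) + degree E"
        using mR Enz degree_mult_eq by metis
      then have "degree R \<ge> 2" by (simp add: degree_mpr D_def)
      then show False using dR by simp
    qed
    then have "D dvd P" unfolding R_def by (simp add: mod_eq_0_iff_dvd)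
    moreover have "(-2 * Re z)^2 < 4 * (cmod z)^2"
      using False cm by (simp add: power2_eq_square) (simp add: not_square_less_zero less_le)
    ultimately show ?thesis unfolding D_def by blast
  qed
qed


lemma quad_id:
  fixes p U W d b g :: "'a::comm_ring_1"
  assumes "4*U*U = 2*W - 2*d - b" "W*W = d*d + b*d + g"
  shows "(p*p+d)*(p*p+d) + b*(p*p+d) + g = (p*p - 2*U*p + W)*(p*p + 2*U*p + W)"
proof -
  have e1: "2*W - 4*U*U = 2*d + b"
  proof -
    have "2*W - 4*U*U = 2*W - (2*W - 2*d - b)" by (simp only: assms(1))
    then show ?thesis by (simp add: algebra_simps)
  qed
  have "(p*p - 2*U*p + W)*(p*p + 2*U*p + W) = (p*p)*(p*p) + (2*W - 4*U*U)*(p*p) + W*W"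
    by (simp add: algebra_simps)
  also have "\<dots> = (p*p)*(p*p) + (2*d + b)*(p*p) + (d*d + b*d + g)" by (simp only: e1 assms(2))
  also have "\<dots> = (p*p+d)*(p*p+d) + b*(p*p+d) + g" by (simp add: algebra_simps)
  finally show ?thesis by simp
qed

locale gm =
  fixes a :: "'k::real_normed_field" and m :: real
  assumes mmin: "\<And>b c. m \<le> norm (a*a + of_real b * a + of_real c)"
    and m0: "0 \<le> m"
begin

definition q :: "real \<Rightarrow> real \<Rightarrow> 'k" where "q b c = a*a + of_real b * a + of_real c"

lemma qmin: "m \<le> norm (q b c)" unfolding q_def by (rule mmin)

lemma QF:
  assumes bg: "\<beta>^2 < 4*\<gamma>"
  shows "m*m \<le> norm (q b c * q b c + of_real \<beta> * q b c + of_real \<gamma>)"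
proof -
  define s where "s = b/2"
  have bs: "b = 2 * s" unfolding s_def by simp
  define p where "p = a + of_real s"
  define dd where "dd = c - s * s"
  have Y: "q b c = p*p + of_real dd"
    unfolding q_def p_def dd_def bs by (simp add: algebra_simps)
  define X where "X = dd*dd + \<beta>*dd + \<gamma>"
  have X: "X = (dd + \<beta>/2)^2 + (\<gamma> - \<beta>^2/4)" unfolding X_def by (simp add: power2_eq_square algebra_simps)
  have Xpos: "X \<ge> (dd + \<beta>/2)^2" using X bg by simp
  define W where "W = sqrt X"
  have X0: "X \<ge> 0" using Xpos by (meson order_trans zero_le_power2)
  have W2: "W*W = dd*dd + \<beta>*dd + \<gamma>" unfolding W_def X_def[symmetric] using X0 by simp
  have Wge: "W \<ge> dd + \<beta>/2"
  proof -
    have "sqrt ((dd + \<beta>/2)^2) \<le> W" unfolding W_def using Xpos real_sqrt_le_mono by blast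
    then show ?thesis by simp
  qed
  define u where "u = sqrt ((2*W - 2*dd - \<beta>)/4)"
  have Z0: "2*W - 2*dd - \<beta> \<ge> 0" using Wge by simp
  have uu: "u*u = (2*W - 2*dd - \<beta>)/4" unfolding u_def using Z0 by simp
  have u2: "4*u*u = 2*W - 2*dd - \<beta>" using uu by (simp add: mult.assoc)
  have id: "(p*p+ of_real dd)*(p*p+ of_real dd) + of_real \<beta>*(p*p+ of_real dd) + of_real \<gamma>
      = (p*p - 2* of_real u*p + of_real W)*(p*p + 2* of_real u*p + of_real W)"
  proof (rule quad_id)
    show "4 * of_real u * of_real u = 2 * of_real W - 2 * of_real dd - (of_real \<beta>::'k)"
      using arg_cong[OF u2, of "of_real :: real \<Rightarrow> 'k"] by simp
    show "of_real W * of_real W = of_real dd * of_real dd + of_real \<beta> * of_real dd + (of_real \<gamma>::'k)"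
      using arg_cong[OF W2, of "of_real :: real \<Rightarrow> 'k"] by simp
  qed
  have F1: "p*p - 2* of_real u*p + of_real W = q (b - 2*u) (s * s - 2*u * s + W)"
    unfolding q_def p_def bs by (simp add: algebra_simps)
  have F2: "p*p + 2* of_real u*p + of_real W = q (b + 2*u) (s * s + 2*u * s + W)"
    unfolding q_def p_def bs by (simp add: algebra_simps)
  have "q b c * q b c + of_real \<beta> * q b c + of_real \<gamma> = q (b - 2*u) (s * s - 2*u * s + W) * q (b + 2*u) (s * s + 2*u * s + W)"
    using id Y F1 F2 by simp
  then have "norm (q b c * q b c + of_real \<beta> * q b c + of_real \<gamma>) = norm (q (b - 2*u) (s * s - 2*u * s + W)) * norm (q (b + 2*u) (s * s + 2*u * s + W))"
    by (simp add: norm_mult)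
  moreover have "m*m \<le> norm (q (b - 2*u) (s * s - 2*u * s + W)) * norm (q (b + 2*u) (s * s + 2*u * s + W))"
    using qmin m0 by (intro mult_mono) auto
  ultimately show ?thesis by simp
qed


lemma lower:
  assumes "lead_coeff P = 1"
  shows "m ^ degree P \<le> norm (poly (mpr P) (q b c))"
  using assms
proof (induction "degree P" arbitrary: P rule: less_induct)
  case less
  let ?Y = "q b c"
  show ?case
  proof (cases "degree P = 0")
    case True
    then have "P = [:1:]" using less.prems degree_0_id[OF True] by simp
    then show ?thesis by (simp add: True map_poly_pCons)
  next
    case False
    have Pnz: "P \<noteq> 0" using less.prems by auto
    have mult_case: "m ^ degree P \<le> norm (poly (mpr P) ?Y)"
      if PD: "P = D * P1" and lD: "lead_coeff D = 1" and dD: "degree D > 0"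
        and eD: "m ^ degree D \<le> norm (poly (mpr D) ?Y)" for D P1
    proof -
      have Dnz: "D \<noteq> 0" "P1 \<noteq> 0" using Pnz PD by auto
      have lP1: "lead_coeff P1 = 1" using less.prems PD lD by (simp add: lead_coeff_mult)
      have dP: "degree P = degree D + degree P1" using PD Dnz degree_mult_eq by blast
      have IH: "m ^ degree P1 \<le> norm (poly (mpr P1) ?Y)"
        using less.hyps[of P1] lP1 dP dD by simp
      have "poly (mpr P) ?Y = poly (mpr D) ?Y * poly (mpr P1) ?Y" using PD by (simp add: mpr_mult)
      then have "norm (poly (mpr P) ?Y) = norm (poly (mpr D) ?Y) * norm (poly (mpr P1) ?Y)"
        by (simp add: norm_mult)
      moreover have "m ^ degree D * m ^ degree P1 \<le> norm (poly (mpr D) ?Y) * norm (poly (mpr P1) ?Y)"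
        using eD IH m0 by (intro mult_mono) auto
      ultimately show ?thesis using dP by (simp add: power_add)
    qed
    from real_poly_factor[of P] False
    consider (lin) r where "poly P r = 0" | (quad) \<beta> \<gamma> where "\<beta>^2 < 4*\<gamma>" "[:\<gamma>,\<beta>,1:] dvd P" by auto
    then show ?thesis
    proof cases
      case lin
      then obtain P1 where P1: "P = [:-r,1:] * P1" using poly_eq_0_iff_dvd by (metis dvdE)
      have "poly (mpr [:-r,1:]) ?Y = q b (c - r)" by (simp add: map_poly_pCons q_def algebra_simps)
      then have "m ^ degree [:-r,1::real:] \<le> norm (poly (mpr [:-r,1:]) ?Y)" using qmin by simp
      then show ?thesis using mult_case[OF P1] by simp
    next
      case quad
      then obtain P1 where P1: "P = [:\<gamma>,\<beta>,1:] * P1" by (metis dvdE)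
      have "poly (mpr [:\<gamma>,\<beta>,1:]) ?Y = ?Y * ?Y + of_real \<beta> * ?Y + of_real \<gamma>"
        by (simp add: map_poly_pCons algebra_simps)
      then have "m ^ degree [:\<gamma>,\<beta>,1::real:] \<le> norm (poly (mpr [:\<gamma>,\<beta>,1:]) ?Y)"
        using QF[OF quad(1), of b c] by (simp add: power2_eq_square)
      then show ?thesis using mult_case[OF P1] by simp
    qed
  qed
qed

lemma geom_poly:
  fixes Y :: 'k and e :: real
  shows "\<exists>P. lead_coeff P = 1 \<and> degree P = n \<and> poly (mpr P) Y * (Y - of_real e) = Y^(Suc n) - of_real e ^ (Suc n)"
proof (induction n)
  case 0
  show ?case by (rule exI[of _ 1]) simp
next
  case (Suc n)
  then obtain P where P: "lead_coeff P = 1" "degree P = n" "poly (mpr P) Y * (Y - of_real e) = Y^(Suc n) - of_real e ^ (Suc n)"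
    by blast
  have Pnz: "P \<noteq> 0" using P by auto
  define P' where "P' = pCons (e^(Suc n)) P"
  have "poly (mpr P') Y * (Y - of_real e) = of_real (e^Suc n) * (Y - of_real e) + Y * (poly (mpr P) Y * (Y - of_real e))"
    unfolding P'_def by (simp add: map_poly_pCons algebra_simps)
  also have "\<dots> = of_real (e^Suc n) * (Y - of_real e) + Y * (Y^(Suc n) - of_real e ^ (Suc n))" using P(3) by simp
  also have "\<dots> = Y^(Suc (Suc n)) - of_real e ^ (Suc (Suc n))" by (simp add: algebra_simps)
  finally have eq: "poly (mpr P') Y * (Y - of_real e) = Y^(Suc (Suc n)) - of_real e ^ (Suc (Suc n))" .
  moreover have "lead_coeff P' = 1" unfolding P'_def using P Pnz by simp
  moreover have "degree P' = Suc n" unfolding P'_def using P Pnz by simp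
  ultimately show ?case by blast
qed

lemma flat:
  assumes Y: "norm (q b c) = m" and e: "0 < e" "e < m"
  shows "norm (q b (c - e)) = m"
proof -
  let ?Y = "q b c"
  have qe: "q b (c - e) = ?Y - of_real e" unfolding q_def by simp
  have mpos: "m > 0" using e by simp
  have bnd: "norm (?Y - of_real e) \<le> m + e * (e/m)^n" for n
  proof -
    obtain P where P: "lead_coeff P = 1" "degree P = n" "poly (mpr P) ?Y * (?Y - of_real e) = ?Y^(Suc n) - of_real e ^ (Suc n)"
      using geom_poly by blast
    have "m^n * norm (?Y - of_real e) \<le> norm (poly (mpr P) ?Y) * norm (?Y - of_real e)"
      using lower[OF P(1), of b c] P(2) by (intro mult_right_mono) auto
    also have "\<dots> = norm (?Y^(Suc n) - of_real e ^ (Suc n))" by (simp only: norm_mult[symmetric] P(3))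
    also have "\<dots> \<le> norm (?Y^(Suc n)) + norm (of_real e ^ (Suc n) :: 'k)" by (rule norm_triangle_ineq4)
    also have "\<dots> = m^(Suc n) + e^(Suc n)"
    proof -
      have "norm (?Y^(Suc n)) = m^(Suc n)" by (simp only: norm_power Y)
      moreover have "norm (of_real e ^ (Suc n) :: 'k) = e^(Suc n)" using e by (simp only: norm_power norm_of_real abs_of_pos)
      ultimately show ?thesis by simp
    qed
    finally have "m^n * norm (?Y - of_real e) \<le> m^(Suc n) + e^(Suc n)" .
    then have "norm (?Y - of_real e) \<le> (m^(Suc n) + e^(Suc n)) / m^n"
      using mpos by (simp add: field_simps mult.commute)
    also have "\<dots> = m + e * (e/m)^n" using mpos by (simp add: field_simps power_divide)
    finally show ?thesis .
  qed
  have lim: "(\<lambda>n. m + e * (e/m)^n) \<longlonglongrightarrow> m + e * 0"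
    using e by (intro tendsto_intros) (simp add: divide_less_cancel)
  have "norm (?Y - of_real e) \<le> m" using LIMSEQ_le_const[OF lim] bnd by simp
  moreover have "m \<le> norm (?Y - of_real e)" using qmin[of b "c - e"] qe by simp
  ultimately show ?thesis using qe by simp
qed

lemma gm_contra:
  assumes Y: "norm (q b c) = m" and mpos: "m > 0"
  shows False
proof -
  define e where "e = m/2"
  have e: "0 < e" "e < m" using mpos e_def by auto
  have it: "norm (q b (c - real N * e)) = m" for N
  proof (induction N)
    case 0 then show ?case using Y by simp
  next
    case (Suc N)
    have "norm (q b (c - real N * e - e)) = m" using flat[OF Suc e] .
    moreover have "c - real N * e - e = c - real (Suc N) * e" by (simp add: algebra_simps)
    ultimately show ?case by simp
  qed
  have "q b (c - real 5 * e) = q b c - of_real (5 * e)" unfolding q_def by simp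
  then have "norm (of_real (5 * e) :: 'k) - norm (q b c) \<le> norm (q b (c - real 5 * e))"
    by (metis norm_minus_commute norm_triangle_ineq2)
  then show False using it[of 5] Y e_def mpos by simp
qed

end


theorem gm_root:
  fixes a :: "'k::real_normed_field"
  shows "\<exists>b c::real. a*a + of_real b * a + of_real c = 0"
proof (cases "\<exists>r. a = of_real r")
  case True
  then obtain r where r: "a = of_real r" by blast
  have "a*a + of_real (-2*r) * a + of_real (r*r) = of_real (r*r + (-2*r)*r + r*r)" unfolding r by simp
  also have "\<dots> = 0" by simp
  finally show ?thesis by blast
next
  case False
  define R where "R = 2 * norm a + 1"
  have "\<exists>x\<in>{-R..R}. \<forall>y\<in>{-R..R}. norm (a - of_real x) \<le> norm (a - of_real y)"
    by (rule continuous_attains_inf) (auto simp: R_def intro!: continuous_intros)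
  then obtain r0 where r0: "r0 \<in> {-R..R}" "\<And>y. y \<in> {-R..R} \<Longrightarrow> norm (a - of_real r0) \<le> norm (a - of_real y)"
    by blast
  define \<delta> where "\<delta> = norm (a - of_real r0)"
  have dpos: "\<delta> > 0" unfolding \<delta>_def using False by auto
  have dle: "\<delta> \<le> norm (a - of_real r)" for r
  proof (cases "r \<in> {-R..R}")
    case True then show ?thesis using r0 \<delta>_def by auto
  next
    case False
    then have "\<bar>r\<bar> > R" by auto
    have "norm (of_real r :: 'k) \<le> norm (a - of_real r) + norm a"
      by (metis add.commute norm_minus_commute norm_triangle_sub)
    then have "norm (a - of_real r) \<ge> \<bar>r\<bar> - norm a" by simp
    then have "norm (a - of_real r) \<ge> norm (a - of_real 0)" using \<open>\<bar>r\<bar> > R\<close> R_def by simp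
    moreover have "R \<ge> 1" unfolding R_def using norm_ge_zero[of a] by linarith
    then have "0 \<in> {-R..R}" by auto
    ultimately show ?thesis using r0(2)[of 0] \<delta>_def by simp
  qed
  have linb: "\<bar>b\<bar> * \<delta> \<le> norm (of_real b * a + of_real c :: 'k)" for b c
  proof (cases "b = 0")
    case True then show ?thesis by simp
  next
    case False
    have "of_real b * a + of_real c = (of_real b :: 'k) * (a - of_real (- c / b))"
      using False by (simp add: algebra_simps of_real_divide)
    then have "norm (of_real b * a + of_real c :: 'k) = \<bar>b\<bar> * norm (a - of_real (- c / b))"
      by (simp add: norm_mult)
    then show ?thesis using dle[of "-c/b"] by (simp add: mult_left_mono)
  qed
  define M0 where "M0 = norm (a*a)"
  define B where "B = 2*M0/\<delta>"
  define C where "C = 2*M0 + B * norm a"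
  have B0: "B \<ge> 0" unfolding B_def M0_def using dpos by simp
  have C0: "C \<ge> 0" unfolding C_def M0_def using B0 by simp
  define f where "f p = norm (a*a + of_real (fst p) * a + of_real (snd p))" for p :: "real \<times> real"
  have "\<exists>x\<in>{-B..B} \<times> {-C..C}. \<forall>y\<in>{-B..B} \<times> {-C..C}. f x \<le> f y"
    by (rule continuous_attains_inf) (auto simp: f_def B0 C0 intro!: continuous_intros compact_Times)
  then obtain p0 where p0: "p0 \<in> {-B..B} \<times> {-C..C}" "\<And>y. y \<in> {-B..B} \<times> {-C..C} \<Longrightarrow> f p0 \<le> f y"
    by blast
  define m where "m = f p0"
  have f00: "m \<le> M0" unfolding m_def M0_def using p0(2)[of "(0,0)"] B0 C0 by (simp add: f_def)
  have mmin: "m \<le> norm (a*a + of_real b * a + of_real c)" for b c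
  proof (rule ccontr)
    assume "\<not> ?thesis"
    then have lt: "norm (a*a + of_real b * a + of_real c) < m" by simp
    have "norm (of_real b * a + of_real c :: 'k) \<le> norm (a*a + of_real b * a + of_real c) + norm (a*a)"
      by (metis add.assoc add_diff_cancel_left' norm_triangle_ineq4)
    then have h: "norm (of_real b * a + of_real c :: 'k) \<le> 2 * M0" using lt f00 M0_def by simp
    then have "\<bar>b\<bar> * \<delta> \<le> 2 * M0" using linb[of b c] by simp
    then have bB: "\<bar>b\<bar> \<le> B" unfolding B_def using dpos by (simp add: field_simps)
    have "norm (of_real c :: 'k) \<le> norm (of_real b * a + of_real c :: 'k) + norm (of_real b * a :: 'k)"
      by (metis add_diff_cancel_left' norm_triangle_ineq4 add.commute)
    then have "\<bar>c\<bar> \<le> 2 * M0 + \<bar>b\<bar> * norm a" using h by (simp add: norm_mult)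
    also have "\<dots> \<le> C" unfolding C_def using bB by (simp add: mult_right_mono)
    finally have "(b,c) \<in> {-B..B} \<times> {-C..C}" using bB by auto
    then have "m \<le> f (b,c)" using p0(2) m_def by simp
    then show False using lt by (simp add: f_def)
  qed
  interpret gm a m using mmin by unfold_locales (auto simp: m_def f_def)
  obtain b0 c0 where p0e: "p0 = (b0, c0)" by (cases p0)
  have "norm (q b0 c0) = m" unfolding q_def m_def f_def p0e by simp
  then have "m = 0" using gm_contra[of b0 c0] m0 by force
  then have "a*a + of_real b0 * a + of_real c0 = 0" using \<open>norm (q b0 c0) = m\<close> q_def by simp
  then show ?thesis by blast
qed

lemma elem_form:
  fixes x :: "'k::real_normed_field"
  shows "(\<exists>r. x = of_real r) \<or> (\<exists>r t u. x = of_real r + of_real t * u \<and> u * u = -1)"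
proof -
  obtain b c where bc: "x*x + of_real b * x + of_real c = 0" using gm_root by blast
  define p where "p = x + of_real (b/2)"
  define D where "D = b*b/4 - c"
  have pp: "p * p = of_real D"
  proof -
    have "p * p = x*x + of_real b * x + of_real (b*b/4)" unfolding p_def
      by (simp add: algebra_simps of_real_divide)
    also have "\<dots> = of_real (b*b/4) - of_real c"
    proof -
      have h: "x*x + of_real b * x = - of_real c" using bc eq_neg_iff_add_eq_0 by blast
      show ?thesis using h by simp
    qed
    finally show ?thesis unfolding D_def by simp
  qed
  show ?thesis
  proof (cases "D \<ge> 0")
    case True
    define t where "t = sqrt D"
    have tt: "of_real t * of_real t = (of_real D :: 'k)" unfolding t_def using True
      by (metis of_real_mult real_sqrt_mult_self abs_of_nonneg)
    have "(p - of_real t) * (p + of_real t) = 0" using pp tt by (simp add: algebra_simps)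
    then have "p = of_real t \<or> p = - of_real t" by (simp add: eq_neg_iff_add_eq_0)
    then have "x = of_real (t - b/2) \<or> x = of_real (- t - b/2)" unfolding p_def
      by (auto simp: algebra_simps)
    then show ?thesis by blast
  next
    case False
    define t where "t = sqrt (- D)"
    have tpos: "t > 0" unfolding t_def using False by simp
    have tt: "of_real t * of_real t = (of_real (-D) :: 'k)" unfolding t_def using False
      by (metis of_real_mult real_sqrt_mult_self abs_of_nonneg less_le neg_0_le_iff_le not_le)
    define u where "u = p / of_real t"
    have "u * u = (p * p) / (of_real t * of_real t)" unfolding u_def by simp
    also have "\<dots> = of_real D / of_real (-D)" using pp tt by simp
    also have "\<dots> = -1" using False by (simp add: of_real_divide[symmetric])
    finally have uu: "u * u = -1" .
    have "x = of_real (-b/2) + of_real t * u" unfolding u_def p_def using tpos by simp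
    then show ?thesis using uu by blast
  qed
qed

theorem k_class:
  "(\<forall>x::'k::real_normed_field. \<exists>r. x = of_real r) \<or>
   (\<exists>j::'k. j * j = -1 \<and> (\<forall>x. \<exists>r s. x = of_real r + of_real s * j))"
proof (cases "\<forall>x::'k. \<exists>r. x = of_real r")
  case True then show ?thesis by blast
next
  case False
  then obtain x0 :: 'k where "\<nexists>r. x0 = of_real r" by blast
  then obtain r t j where "x0 = of_real r + of_real t * j" and jj: "j * j = -1" using elem_form[of x0] by blast
  have "\<exists>r s. x = of_real r + of_real s * j" for x
  proof -
    from elem_form[of x] show ?thesis
    proof
      assume "\<exists>r. x = of_real r"
      then obtain r where "x = of_real r" by blast
      then show ?thesis by (intro exI[of _ r] exI[of _ 0]) simp
    next
      assume "\<exists>r t u. x = of_real r + of_real t * u \<and> u * u = -1"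
      then obtain r t u where x: "x = of_real r + of_real t * u" and uu: "u * u = -1" by blast
      have "(u - j) * (u + j) = 0" using uu jj by (simp add: algebra_simps)
      then have "u = j \<or> u = - j" by (simp add: eq_neg_iff_add_eq_0)
      then show ?thesis
      proof
        assume "u = j" then show ?thesis using x by blast
      next
        assume "u = - j" then have "x = of_real r + of_real (-t) * j" using x by simp
        then show ?thesis by blast
      qed
    qed
  qed
  then show ?thesis using jj by blast
qed


lemma k_functional:
  fixes sc :: "'k::real_normed_field \<Rightarrow> 'v::banach \<Rightarrow> 'v"
  assumes kb: "kbanach sc" and v: "v \<noteq> 0"
  shows "\<exists>\<psi>::'v\<Rightarrow>'k. (\<forall>x y. \<psi> (x+y) = \<psi> x + \<psi> y) \<and> (\<forall>c x. \<psi> (sc c x) = c * \<psi> x)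
     \<and> (\<exists>K. \<forall>x. norm (\<psi> x) \<le> K * norm x) \<and> \<psi> v \<noteq> 0"
proof -
  have vs: "vector_space sc" and nsc: "\<And>c x. norm (sc c x) = norm c * norm x"
    and rsc: "\<And>r x. sc (of_real r) x = scaleR r x" using kb unfolding kbanach_def by auto
  interpret vector_space sc by fact
  obtain g :: "'v \<Rightarrow> real" where g: "linear g" "\<And>x. \<bar>g x\<bar> \<le> norm x" "g v = norm v"
    using real_hb[OF v] by blast
  have gadd: "g (x + y) = g x + g y" for x y using g(1) by (simp add: linear_add)
  have gsc: "g (scaleR r x) = r * g x" for r x using g(1) by (simp add: linear_scale)
  have gneg: "g (- x) = - g x" for x using g(1) by (simp add: linear_neg)
  have gv: "g v \<noteq> 0" using g(3) v by simp
  from k_class show ?thesis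
  proof
    assume allr: "\<forall>x::'k. \<exists>r. x = of_real r"
    define \<psi> where "\<psi> x = (of_real (g x) :: 'k)" for x
    have "\<psi> (sc c x) = c * \<psi> x" for c x
    proof -
      obtain r where r: "c = of_real r" using allr by blast
      show ?thesis unfolding \<psi>_def r rsc gsc by simp
    qed
    moreover have "\<psi> (x+y) = \<psi> x + \<psi> y" for x y unfolding \<psi>_def gadd by simp
    moreover have "norm (\<psi> x) \<le> 1 * norm x" for x unfolding \<psi>_def using g(2) by simp
    moreover have "\<psi> v \<noteq> 0" unfolding \<psi>_def using gv by simp
    ultimately show ?thesis by blast
  next
    assume "\<exists>j::'k. j * j = -1 \<and> (\<forall>x. \<exists>r s. x = of_real r + of_real s * j)"
    then obtain j :: 'k where jj: "j * j = -1" and jform: "\<And>x. \<exists>r s. x = of_real r + of_real s * j" by blast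
    define \<psi> where "\<psi> x = of_real (g x) - j * of_real (g (sc j x))" for x
    have padd: "\<psi> (x+y) = \<psi> x + \<psi> y" for x y unfolding \<psi>_def by (simp add: gadd scale_right_distrib algebra_simps)
    have jjx: "sc j (sc j x) = - x" for x using jj by simp
    have pj: "\<psi> (sc j x) = j * \<psi> x" for x
    proof -
      have "\<psi> (sc j x) = of_real (g (sc j x)) + j * of_real (g x)" unfolding \<psi>_def jjx gneg by simp
      also have "\<dots> = j * \<psi> x"
      proof -
        have jz: "j * (j * z) = - z" for z :: 'k using jj by (simp add: mult.assoc[symmetric])
        show ?thesis unfolding \<psi>_def right_diff_distrib jz by simp
      qed
      finally show ?thesis .
    qed
    have pr: "\<psi> (scaleR r x) = of_real r * \<psi> x" for r x
    proof -
      have "sc j (scaleR r x) = scaleR r (sc j x)"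
        by (metis rsc scale_scale mult.commute)
      then show ?thesis unfolding \<psi>_def by (simp add: gsc algebra_simps)
    qed
    have "\<psi> (sc c x) = c * \<psi> x" for c x
    proof -
      obtain r s where c: "c = of_real r + of_real s * j" using jform by blast
      have "sc c x = scaleR r x + scaleR s (sc j x)" unfolding c
        by (simp add: scale_left_distrib rsc[symmetric])
      then have "\<psi> (sc c x) = of_real r * \<psi> x + of_real s * (j * \<psi> x)" by (simp add: padd pr pj)
      then show ?thesis unfolding c by (simp add: algebra_simps)
    qed
    moreover have "norm (\<psi> x) \<le> (1 + norm j * norm j) * norm x" for x
    proof -
      have "norm (\<psi> x) \<le> norm (of_real (g x) :: 'k) + norm (j * of_real (g (sc j x)))"
        unfolding \<psi>_def by (rule norm_triangle_ineq4)
      also have "\<dots> = \<bar>g x\<bar> + norm j * \<bar>g (sc j x)\<bar>" by (simp add: norm_mult)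
      also have "\<dots> \<le> norm x + norm j * (norm j * norm x)"
        using g(2)[of x] g(2)[of "sc j x"] nsc[of j x] by (intro add_mono mult_left_mono) auto
      finally show ?thesis by (simp add: algebra_simps)
    qed
    moreover have "\<psi> v \<noteq> 0"
    proof
      assume "\<psi> v = 0"
      then have e: "of_real (g v) = j * of_real (g (sc j v))" unfolding \<psi>_def by simp
      show False
      proof (cases "g (sc j v) = 0")
        case True then show False using e gv by simp
      next
        case False
        then have "j = of_real (g v / g (sc j v))" using e by (simp add: of_real_divide field_simps)
        then have "j * j = of_real ((g v / g (sc j v)) * (g v / g (sc j v)))" by (simp only: of_real_mult)
        then have "of_real ((g v / g (sc j v)) * (g v / g (sc j v))) = (of_real (-1) :: 'k)" using jj by simp
        then have "(g v / g (sc j v)) * (g v / g (sc j v)) = -1" using of_real_eq_iff by blast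
        moreover have "(g v / g (sc j v)) * (g v / g (sc j v)) \<ge> 0" by simp
        ultimately show False by simp
      qed
    qed
    ultimately show ?thesis using padd by blast
  qed
qed


lemma nonscalar_idem:
  fixes sc :: "'k::real_normed_field \<Rightarrow> 'v::banach \<Rightarrow> 'v"
  assumes kb: "kbanach sc" and inf: "inf_dim sc" and sA: "std_op_alg sc A"
  shows "\<exists>P\<in>A. (\<forall>x. P (P x) = P x) \<and> \<not> (\<exists>c. P = (\<lambda>x. sc c x))"
proof -
  have vs: "vector_space sc" and nsc: "\<And>c x. norm (sc c x) = norm c * norm x"
    using kb unfolding kbanach_def by auto
  interpret vector_space sc by fact
  have nspan: "\<And>F. finite F \<Longrightarrow> span F \<noteq> UNIV" using inf unfolding inf_dim_def by blast
  have sp: "span {} \<noteq> (UNIV :: 'v set)" by (rule nspan) (rule finite.emptyI)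
  have exv: "\<exists>v::'v. v \<noteq> 0"
  proof (rule ccontr)
    assume "\<not> (\<exists>v::'v. v \<noteq> 0)"
    then have u: "UNIV = {0::'v}" by blast
    have e: "span {} = {0::'v}" by (rule span_empty)
    show False using sp e u by (simp only:)
  qed
  then obtain v :: 'v where v: "v \<noteq> 0" by blast
  obtain \<psi> :: "'v \<Rightarrow> 'k" where padd: "\<And>x y. \<psi> (x+y) = \<psi> x + \<psi> y" and psc: "\<And>c x. \<psi> (sc c x) = c * \<psi> x"
    and K: "\<exists>K. \<forall>x. norm (\<psi> x) \<le> K * norm x" and pv: "\<psi> v \<noteq> 0"
    using k_functional[OF kb v] by blast
  obtain K where K: "\<And>x. norm (\<psi> x) \<le> K * norm x" using K by blast
  have pdiff: "\<psi> (x - y) = \<psi> x - \<psi> y" for x y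
    using padd[of y "x - y"] by (simp add: algebra_simps)
  define P where "P x = sc (\<psi> x / \<psi> v) v" for x
  have lin: "Vector_Spaces.linear sc sc P"
    unfolding Vector_Spaces.linear_iff
  proof (intro conjI allI)
    show "vector_space sc" by fact
    show "vector_space sc" by fact
    show "P (x + y) = P x + P y" for x y unfolding P_def padd by (simp add: add_divide_distrib scale_left_distrib)
    show "P (sc c x) = sc c (P x)" for c x unfolding P_def psc by simp
  qed
  have bnd: "norm (P x) \<le> (K * norm v / norm (\<psi> v)) * norm x" for x
  proof -
    have "norm (P x) = norm (\<psi> x) / norm (\<psi> v) * norm v" unfolding P_def nsc by (simp add: norm_divide)
    also have "\<dots> \<le> K * norm x / norm (\<psi> v) * norm v"
      using K[of x] pv by (intro mult_right_mono divide_right_mono) auto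
    finally show ?thesis by (simp add: field_simps)
  qed
  have fr: "finite_rank sc P"
    unfolding finite_rank_def bop_def
  proof (intro conjI exI)
    show "Vector_Spaces.linear sc sc P" by fact
    show "\<forall>x. norm (P x) \<le> (K * norm v / norm (\<psi> v)) * norm x" using bnd by blast
    show "finite {v}" by simp
    show "range P \<subseteq> span {v}" unfolding P_def by (auto intro: span_scale span_base)
  qed
  have "{T. finite_rank sc T} \<subseteq> A" using sA apply (unfold std_op_alg_def) apply (elim conjE) apply assumption done
  then have PA: "P \<in> A" using fr by blast
  have idem: "P (P x) = P x" for x unfolding P_def psc using pv by simp
  have ns: "\<not> (\<exists>c. P = (\<lambda>x. sc c x))"
  proof
    assume "\<exists>c. P = (\<lambda>x. sc c x)"
    then obtain \<mu> where "P = (\<lambda>x. sc \<mu> x)" by blast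
    then have mu: "\<And>x. P x = sc \<mu> x" by simp
    have "span {v} \<noteq> UNIV" by (rule nspan) simp
    then obtain u where u: "u \<notin> span {v}" by blast
    define w where "w = u - sc (\<psi> u / \<psi> v) v"
    have pw: "\<psi> w = 0" unfolding w_def pdiff psc using pv by simp
    have wnz: "w \<noteq> 0"
    proof
      assume "w = 0"
      then have "u = sc (\<psi> u / \<psi> v) v" unfolding w_def by simp
      moreover have "sc (\<psi> u / \<psi> v) v \<in> span {v}" by (intro span_scale span_base) simp
      ultimately have "u \<in> span {v}" by simp
      then show False using u by simp
    qed
    have "sc \<mu> w = 0" using mu[of w] pw unfolding P_def by simp
    then have "\<mu> = 0" using wnz by simp
    then have "P v = 0" using mu by simp
    moreover have "P v = v" unfolding P_def using pv by simp
    ultimately show False using v by simp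
  qed
  show ?thesis using PA idem ns by blast
qed


lemma inf_dim_nz: "vector_space sc \<Longrightarrow> inf_dim (sc::'k::field \<Rightarrow> 'v::ab_group_add \<Rightarrow> 'v) \<Longrightarrow> \<exists>x::'v. x \<noteq> 0"
proof (rule ccontr)
  assume vs: "vector_space sc" and a: "inf_dim sc" "\<not> (\<exists>x::'v. x \<noteq> 0)"
  interpret vector_space sc by fact
  have u: "UNIV = {0::'v}" using a by blast
  have "module.span sc {} = (UNIV::'v set)" unfolding u by (rule span_empty)
  then have "\<exists>F. finite F \<and> module.span sc F = (UNIV::'v set)" by (intro exI[of _ "{}"]) simp
  then show False using a(1) unfolding inf_dim_def by simp
qed

lemma soa_sub: "std_op_alg sc A \<Longrightarrow> A \<subseteq> {T. bop sc T}"
  apply (unfold std_op_alg_def) apply (elim conjE) apply assumption done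

lemma soa_id: "std_op_alg sc A \<Longrightarrow> id \<in> A"
  apply (unfold std_op_alg_def) apply (elim conjE) apply assumption done

lemma soa_scal0: "std_op_alg sc A \<Longrightarrow> (\<forall>c. \<forall>T\<in>A. (\<lambda>x. sc c (T x)) \<in> A)"
  apply (unfold std_op_alg_def) apply (elim conjE) apply assumption done

lemma soa_lin: "std_op_alg sc A \<Longrightarrow> T \<in> A \<Longrightarrow> Vector_Spaces.linear sc sc T"
proof -
  assume "std_op_alg sc A" "T \<in> A"
  then have "bop sc T" using soa_sub by blast
  then show ?thesis unfolding bop_def by (elim conjE)
qed

lemma soa_scal: "std_op_alg sc A \<Longrightarrow> (\<lambda>x. sc c x) \<in> A"
proof -
  assume s: "std_op_alg sc A"
  then have "id \<in> A" "\<forall>c. \<forall>T\<in>A. (\<lambda>x. sc c (T x)) \<in> A" using soa_id[OF s] soa_scal0[OF s] by auto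
  then have "(\<lambda>x. sc c (id x)) \<in> A" by blast
  then show ?thesis by simp
qed

lemma two_sc: "vector_space sc \<Longrightarrow> sc (2::'k::field) z = z + z"
proof -
  assume "vector_space sc"
  interpret vector_space sc by fact
  have "sc (1+1) z = sc 1 z + sc 1 z" by (rule scale_left_distrib)
  then show ?thesis by simp
qed

lemma kb_vs: "kbanach sc \<Longrightarrow> vector_space sc" unfolding kbanach_def by auto

lemma soa_zero: "kbanach sc \<Longrightarrow> std_op_alg sc A \<Longrightarrow> (\<lambda>x. 0) \<in> A"
proof -
  assume k: "kbanach sc" and s: "std_op_alg sc A"
  interpret vector_space sc using kb_vs[OF k] .
  have "(\<lambda>x. sc 0 x) = (\<lambda>x. 0)" by simp
  then show ?thesis using soa_scal[OF s, of 0] by simp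
qed

theorem lemma2p1:
  fixes scX :: "'k::real_normed_field \<Rightarrow> 'x::banach \<Rightarrow> 'x"
    and scY :: "'k \<Rightarrow> 'y::banach \<Rightarrow> 'y"
    and A :: "('x \<Rightarrow> 'x) set" and B :: "('y \<Rightarrow> 'y) set"
    and \<phi> :: "('x \<Rightarrow> 'x) \<Rightarrow> ('y \<Rightarrow> 'y)"
  assumes "kbanach scX" and "kbanach scY"
    and "inf_dim scX" and "inf_dim scY"
    and "std_op_alg scX A" and "std_op_alg scY B"
    and "bij_betw \<phi> A B"
    and "\<And>T. (\<forall>i j. T i j \<in> A) \<Longrightarrow>
           (quadratic2 scX T \<longleftrightarrow> quadratic2 scY (\<lambda>i j. \<phi> (T i j)))"
  shows "\<phi> (\<lambda>x. 0) = (\<lambda>y. 0)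
    \<and> \<phi> ` {(\<lambda>x. scX c x) | c. True} = {(\<lambda>y. scY c y) | c. True}
    \<and> (\<exists>lam. \<phi> id = (\<lambda>y. scY lam y))"
proof -
  note kX = assms(1) and kY = assms(2) and sA = assms(5) and sB = assms(6) and bij = assms(7)
    and pres = assms(8)
  interpret X: vector_space scX using kb_vs[OF kX] .
  interpret Y: vector_space scY using kb_vs[OF kY] .
  have phiA: "\<phi> T \<in> B" if "T \<in> A" for T using bij that bij_betwE by blast
  have surj: "\<exists>T\<in>A. \<phi> T = Z" if "Z \<in> B" for Z using bij that unfolding bij_betw_def by blast
  have Rpres: "Rrel scX X Y \<longleftrightarrow> Rrel scY (\<phi> X) (\<phi> Y)" if "X \<in> A" "Y \<in> A" for X Y
  proof -
    have "Rrel scX X Y \<longleftrightarrow> quadratic2 scX (\<lambda>i j. if j then Y else X)"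
      by (rule quadR[OF kb_vs[OF kX] soa_lin[OF sA that(1)] soa_lin[OF sA that(2)], symmetric])
    also have "\<dots> \<longleftrightarrow> quadratic2 scY (\<lambda>i j. \<phi> (if j then Y else X))"
      by (rule pres) (simp add: that)
    also have "(\<lambda>i j. \<phi> (if j then Y else X)) = (\<lambda>i j. if j then \<phi> Y else \<phi> X)" by (intro ext) simp
    also have "quadratic2 scY (\<lambda>i j. if j then \<phi> Y else \<phi> X) \<longleftrightarrow> Rrel scY (\<phi> X) (\<phi> Y)"
      by (rule quadR[OF kb_vs[OF kY] soa_lin[OF sB phiA[OF that(1)]] soa_lin[OF sB phiA[OF that(2)]]])
    finally show ?thesis .
  qed
  have R0: "Rrel sc (\<lambda>x. 0) Z \<longleftrightarrow> Rrel sc Z Z" if vs: "vector_space sc" and l: "Vector_Spaces.linear sc sc Z"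
    for sc :: "'k \<Rightarrow> 'v::ab_group_add \<Rightarrow> 'v" and Z
  proof -
    interpret vector_space sc by fact
    have two: "Z (Z x) + Z (Z x) = sc 2 (Z (Z x))" for x
      using two_sc[OF vs] by simp
    show ?thesis
    proof
      assume "Rrel sc (\<lambda>x. 0) Z"
      then obtain c where c: "\<And>x. 0 + Z 0 = sc c 0 \<and> 0 + Z (Z x) = sc c (Z x)" unfolding Rrel_def by blast
      have "Z (Z x) + Z (Z x) = sc (2*c) (Z x)" for x using c[of x] two[of x] by simp
      then show "Rrel sc Z Z" unfolding Rrel_def by blast
    next
      assume "Rrel sc Z Z"
      then obtain c where c: "\<And>x. Z (Z x) + Z (Z x) = sc c (Z x)" unfolding Rrel_def by blast
      have "Z (Z x) = sc (c/2) (Z x)" for x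
      proof -
        have "sc 2 (Z (Z x)) = sc c (Z x)" using c[of x] two[of x] by simp
        then have "sc (1/2) (sc 2 (Z (Z x))) = sc (1/2) (sc c (Z x))" by simp
        then show ?thesis by simp
      qed
      then show "Rrel sc (\<lambda>x. 0) Z" unfolding Rrel_def using lin_facts(4)[OF l] by (intro exI[of _ "c/2"]) simp
    qed
  qed
  obtain W where W: "W \<in> A" "\<phi> W = (\<lambda>y. 0)" using surj[OF soa_zero[OF kY sB]] by blast
  have WR: "Rrel scX W Y \<longleftrightarrow> Rrel scX Y Y" if "Y \<in> A" for Y
    using Rpres[OF W(1) that] Rpres[OF that that] W(2) R0[OF kb_vs[OF kY] soa_lin[OF sB phiA[OF that]]]
    by simp
  have "Rrel scX id id" unfolding Rrel_def
    by (rule exI[of _ 2]) (simp add: two_sc[OF kb_vs[OF kX]])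
  then have "Rrel scX W id" using WR[OF soa_id[OF sA]] by simp
  then obtain c where c: "\<And>x. W x + x = scX c x" unfolding Rrel_def by auto
  have Wsc: "W x = scX (c - 1) x" for x using c[of x] by (simp add: X.scale_left_diff_distrib eq_diff_eq)
  obtain P where P: "P \<in> A" "\<And>x. P (P x) = P x" "\<not> (\<exists>c. P = (\<lambda>x. scX c x))"
    using nonscalar_idem[OF kX assms(3) sA] by blast
  have "Rrel scX P P" unfolding Rrel_def
    by (rule exI[of _ 2]) (simp add: two_sc[OF kb_vs[OF kX]] P(2))
  then have "Rrel scX W P" using WR[OF P(1)] by simp
  then obtain c' where c': "\<And>x. W (W x) + P (W x) = scX c' (W x)" unfolding Rrel_def by auto
  have W0: "W = (\<lambda>x. 0)"
  proof (cases "c - 1 = 0")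
    case True then show ?thesis using Wsc by (auto simp: fun_eq_iff)
  next
    case False
    let ?m = "c - 1"
    have "P x = scX (c' - ?m) x" for x
    proof -
      have "scX ?m (scX ?m x) + scX ?m (P x) = scX c' (scX ?m x)"
        using c'[of x] Wsc lin_facts(2)[OF soa_lin[OF sA P(1)]] by simp
      then have "scX ?m (P x) = scX ?m (scX (c' - ?m) x)"
        by (simp add: X.scale_left_diff_distrib algebra_simps mult.commute)
      then show ?thesis using False X.scale_cancel_left by blast
    qed
    then have "P = (\<lambda>x. scX (c' - ?m) x)" by auto
    then show ?thesis using P(3) by blast
  qed
  have phi0: "\<phi> (\<lambda>x. 0) = (\<lambda>y. 0)" using W W0 by simp
  obtain y0 :: 'y where y0: "y0 \<noteq> 0" using inf_dim_nz[OF kb_vs[OF kY] assms(4)] by blast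
  obtain x0 :: 'x where x0: "x0 \<noteq> 0" using inf_dim_nz[OF kb_vs[OF kX] assms(3)] by blast
  have Qpres: "Qrel scX X Y \<longleftrightarrow> Qrel scY (\<phi> X) (\<phi> Y)" if "X \<in> A" "Y \<in> A" for X Y
  proof -
    have "Qrel scX X Y \<longleftrightarrow> quadratic2 scX (\<lambda>i j. if i then (\<lambda>x. 0) else if j then Y else X)"
      by (rule quadQ[OF kb_vs[OF kX] soa_lin[OF sA that(1)] soa_lin[OF sA that(2)] x0, symmetric])
    also have "\<dots> \<longleftrightarrow> quadratic2 scY (\<lambda>i j. \<phi> (if i then (\<lambda>x. 0) else if j then Y else X))"
      by (rule pres) (simp add: that soa_zero[OF kX sA])
    also have "(\<lambda>i j. \<phi> (if i then (\<lambda>x. 0) else if j then Y else X)) =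
        (\<lambda>i j. if i then (\<lambda>x. 0) else if j then \<phi> Y else \<phi> X)" using phi0 by (intro ext) simp
    also have "quadratic2 scY (\<lambda>i j. if i then (\<lambda>x. 0) else if j then \<phi> Y else \<phi> X) \<longleftrightarrow> Qrel scY (\<phi> X) (\<phi> Y)"
      by (rule quadQ[OF kb_vs[OF kY] soa_lin[OF sB phiA[OF that(1)]] soa_lin[OF sB phiA[OF that(2)]] y0])
    finally show ?thesis .
  qed
  have Qsc: "Qrel sc (\<lambda>x. sc c x) Y" for sc :: "'k \<Rightarrow> 'v::ab_group_add \<Rightarrow> 'v" and c Y unfolding Qrel_def by blast
  have Qid: "\<exists>c. X = (\<lambda>x. sc c x)" if "Qrel sc X id" for sc :: "'k \<Rightarrow> 'v::ab_group_add \<Rightarrow> 'v" and X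
    using that unfolding Qrel_def by auto
  have img: "\<phi> ` {(\<lambda>x. scX c x) | c. True} = {(\<lambda>y. scY c y) | c. True}"
  proof
    show "\<phi> ` {(\<lambda>x. scX c x) | c. True} \<subseteq> {(\<lambda>y. scY c y) | c. True}"
    proof
      fix Z assume "Z \<in> \<phi> ` {(\<lambda>x. scX c x) | c. True}"
      then obtain c where Z: "Z = \<phi> (\<lambda>x. scX c x)" by auto
      obtain I where I: "I \<in> A" "\<phi> I = id" using surj[OF soa_id[OF sB]] by blast
      have "Qrel scX (\<lambda>x. scX c x) I" by (rule Qsc)
      then have "Qrel scY Z id" using Qpres[OF soa_scal[OF sA] I(1)] I(2) Z by simp
      then show "Z \<in> {(\<lambda>y. scY c y) | c. True}" using Qid by blast
    qed
    show "{(\<lambda>y. scY c y) | c. True} \<subseteq> \<phi> ` {(\<lambda>x. scX c x) | c. True}"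
    proof
      fix Z assume "Z \<in> {(\<lambda>y. scY c y) | c. True}"
      then obtain c where Z: "Z = (\<lambda>y. scY c y)" by auto
      obtain X where X: "X \<in> A" "\<phi> X = Z" using surj[OF soa_scal[OF sB, of c]] Z by blast
      have "Qrel scY Z (\<phi> id)" unfolding Z by (rule Qsc)
      then have "Qrel scX X id" using Qpres[OF X(1) soa_id[OF sA]] X(2) by simp
      then obtain d where "X = (\<lambda>x. scX d x)" using Qid by blast
      then show "Z \<in> \<phi> ` {(\<lambda>x. scX c x) | c. True}" using X(2) by blast
    qed
  qed
  have "id = (\<lambda>x. scX 1 x)" by auto
  then have "\<phi> id \<in> {(\<lambda>y. scY c y) | c. True}" using img by blast
  then show ?thesis using phi0 img by blast
qed

end
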